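(* Let $P\in\mathbb{R}^{p_1\times q_1}_+$, $Q\in\mathbb{R}^{p_2\times q_1}_+$, $R\in\mathbb{R}^{p_2\times q_2}_+$ be nonnegative matrices and let \[ M=\begin{bmatrix} P & 0\\ Q & R\end{bmatrix}\in\mathbb{R}^{(p_1+p_2)\times(q_1+q_2)}_+. \] Then $\operatorname{rank}_{\mathrm{psd}}(M)\ge\operatorname{rank}_{\mathrm{psd}}(P)+\operatorname{rank}_{\mathrm{psd}}(R)$. Moreover, if $Q=0$ then equality holds.
   Context: $\mathcal{S}^k_+$ denotes the cone of $k\times k$ real symmetric positive semidefinite matrices, with inner product $\langle A,B\rangle = \operatorname{trace}(AB)$. A psd factorization of size $k$ of a nonnegative matrix $M\in\mathbb{R}^{p\times q}_+$ is a collection $A_1,\dots,A_p, B_1,\dots,B_q \in \mathcal{S}^k_+$ with $M_{ij} = \langle A_i, B_j\rangle$ for all $i,j$; the psd rank $\operatorname{rank}_{\mathrm{psd}}(M)$ is the smallest $k$ for which such a factorization exists. *)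

theory Defs
  imports Main Complex_Main
begin

text \<open>Matrices of varying size are represented as functions nat => nat => real,
  with the relevant entries being those with indices below the stated dimensions.\<close>

definition psd_mat :: "nat \<Rightarrow> (nat \<Rightarrow> nat \<Rightarrow> real) \<Rightarrow> bool" where
  "psd_mat k A \<longleftrightarrow>
     (\<forall>i<k. \<forall>j<k. A i j = A j i) \<and>
     (\<forall>x :: nat \<Rightarrow> real. 0 \<le> (\<Sum>i<k. \<Sum>j<k. x i * A i j * x j))"

definition trace_inner :: "nat \<Rightarrow> (nat \<Rightarrow> nat \<Rightarrow> real) \<Rightarrow> (nat \<Rightarrow> nat \<Rightarrow> real) \<Rightarrow> real" where
  "trace_inner k A B = (\<Sum>i<k. \<Sum>j<k. A i j * B j i)"

definition nonneg_mat :: "nat \<Rightarrow> nat \<Rightarrow> (nat \<Rightarrow> nat \<Rightarrow> real) \<Rightarrow> bool" where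
  "nonneg_mat p q M \<longleftrightarrow> (\<forall>i<p. \<forall>j<q. 0 \<le> M i j)"

definition has_psd_factorization ::
  "nat \<Rightarrow> nat \<Rightarrow> (nat \<Rightarrow> nat \<Rightarrow> real) \<Rightarrow> nat \<Rightarrow> bool" where
  "has_psd_factorization p q M k \<longleftrightarrow>
     (\<exists>A B :: nat \<Rightarrow> nat \<Rightarrow> nat \<Rightarrow> real.
        (\<forall>i<p. psd_mat k (A i)) \<and> (\<forall>j<q. psd_mat k (B j)) \<and>
        (\<forall>i<p. \<forall>j<q. M i j = trace_inner k (A i) (B j)))"

definition psd_rank :: "nat \<Rightarrow> nat \<Rightarrow> (nat \<Rightarrow> nat \<Rightarrow> real) \<Rightarrow> nat" where
  "psd_rank p q M = (LEAST k. has_psd_factorization p q M k)"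

definition block_mat ::
  "nat \<Rightarrow> nat \<Rightarrow> (nat \<Rightarrow> nat \<Rightarrow> real) \<Rightarrow> (nat \<Rightarrow> nat \<Rightarrow> real) \<Rightarrow> (nat \<Rightarrow> nat \<Rightarrow> real)
   \<Rightarrow> nat \<Rightarrow> nat \<Rightarrow> real" where
  "block_mat p1 q1 P Q R i j =
     (if i < p1 then (if j < q1 then P i j else 0)
      else (if j < q1 then Q (i - p1) j else R (i - p1) (j - q1)))"

end

theory Submission
  imports Defs
begin


definition bil :: "nat \<Rightarrow> (nat \<Rightarrow> nat \<Rightarrow> real) \<Rightarrow> (nat \<Rightarrow> real) \<Rightarrow> (nat \<Rightarrow> real) \<Rightarrow> real" where
  "bil k X x y = (\<Sum>a<k. \<Sum>b<k. x a * X a b * y b)"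

lemma bil_alt: "bil k X x y = (\<Sum>a<k. x a * (\<Sum>b<k. X a b * y b))"
  unfolding bil_def by (simp add: sum_distrib_left mult.assoc)

lemma bil_alt2: "bil k X x y = (\<Sum>b<k. (\<Sum>a<k. x a * X a b) * y b)"
  unfolding bil_def by (subst sum.swap) (simp add: sum_distrib_right mult.assoc)

lemma bil_add_left: "bil k X (\<lambda>a. x a + t * y a) z = bil k X x z + t * bil k X y z"
  unfolding bil_def by (simp add: algebra_simps sum.distrib sum_distrib_left)

lemma bil_add_right: "bil k X z (\<lambda>a. x a + t * y a) = bil k X z x + t * bil k X z y"
  unfolding bil_def by (simp add: algebra_simps sum.distrib sum_distrib_left)

lemma bil_sym: "\<forall>i<k. \<forall>j<k. X i j = X j i \<Longrightarrow> bil k X x y = bil k X y x"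
  unfolding bil_def by (subst sum.swap) (auto intro!: sum.cong simp: mult_ac)

lemma psd_bil: "psd_mat k X \<Longrightarrow> 0 \<le> bil k X x x"
  unfolding psd_mat_def bil_def by auto

lemma psd_sym: "psd_mat k X \<Longrightarrow> i < k \<Longrightarrow> j < k \<Longrightarrow> X i j = X j i"
  unfolding psd_mat_def by auto

lemma bil_delta_left: assumes "c < k" shows "bil k X (\<lambda>a. if a = c then 1 else 0) y = (\<Sum>b<k. X c b * y b)"
proof -
  have "bil k X (\<lambda>a. if a = c then 1 else 0) y = (\<Sum>a<k. if a = c then (\<Sum>b<k. X a b * y b) else 0)"
    unfolding bil_alt by (rule sum.cong) auto
  thus ?thesis using assms by simp
qed

lemma bil_delta_right: assumes "c < k" shows "bil k X y (\<lambda>a. if a = c then 1 else 0) = (\<Sum>a<k. y a * X a c)"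
proof -
  have "bil k X y (\<lambda>a. if a = c then 1 else 0) = (\<Sum>b<k. if b = c then (\<Sum>a<k. y a * X a b) else 0)"
    unfolding bil_alt2 by (rule sum.cong) auto
  thus ?thesis using assms by simp
qed

lemma quad_zero:
  assumes X: "psd_mat k X" and q: "bil k X x x = 0" and a: "a < k"
  shows "(\<Sum>b<k. X a b * x b) = 0"
proof -
  define y where "y a = (\<Sum>b<k. X a b * x b)" for a
  define N where "N = bil k X y x"
  define Q where "Q = bil k X y y"
  have N: "N = (\<Sum>a<k. y a * y a)" unfolding N_def bil_alt y_def by simp
  have sy: "bil k X x y = N" unfolding N_def using bil_sym[of k X] psd_sym[OF X] by metis
  have Q0: "Q \<ge> 0" unfolding Q_def using psd_bil[OF X] .
  have N0: "N \<ge> 0" unfolding N by (auto intro: sum_nonneg)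
  have ineq: "0 \<le> 2 * t * N + t * t * Q" for t
  proof -
    have "0 \<le> bil k X (\<lambda>a. x a + t * y a) (\<lambda>a. x a + t * y a)" by (rule psd_bil[OF X])
    also have "\<dots> = 2 * t * N + t * t * Q"
      unfolding bil_add_left bil_add_right q sy Q_def N_def by (simp add: algebra_simps)
    finally show ?thesis .
  qed
  have "N = 0"
  proof (rule ccontr)
    assume "N \<noteq> 0" hence Np: "N > 0" using N0 by simp
    define e where "e = N / (Q + 1)"
    have ep: "e > 0" using Np Q0 unfolding e_def by simp
    have "0 \<le> 2 * (-e) * N + (-e) * (-e) * Q" by (rule ineq)
    hence "e * (2 * N) \<le> e * (e * Q)" by (simp add: algebra_simps)
    hence "2 * N \<le> e * Q" using ep by simp
    moreover have "e * Q \<le> N" unfolding e_def using Np Q0 by (simp add: field_simps)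
    ultimately show False using Np by simp
  qed
  hence "\<forall>a\<in>{..<k}. y a * y a = 0" unfolding N
    by (subst (asm) sum_nonneg_eq_0_iff) auto
  thus ?thesis using a unfolding y_def by simp
qed

lemma diag_zero:
  assumes X: "psd_mat k X" and "X c c = 0" "c < k" "b < k"
  shows "X b c = 0" "X c b = 0"
proof -
  have "bil k X (\<lambda>a. if a = c then 1 else 0) (\<lambda>a. if a = c then 1 else 0) = X c c"
    using assms by (simp add: bil_delta_left if_distrib cong: if_cong)
  hence "(\<Sum>a<k. X b a * (if a = c then 1 else 0)) = 0" using quad_zero[OF X _ \<open>b<k\<close>] assms by simp
  thus "X b c = 0" using assms by (simp add: if_distrib cong: if_cong)
  thus "X c b = 0" using psd_sym[OF X] assms by metis
qed

lemma diag_nonneg: "psd_mat k X \<Longrightarrow> c < k \<Longrightarrow> 0 \<le> X c c"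
  using psd_bil[of k X "\<lambda>a. if a = c then 1 else 0"]
  by (simp add: bil_delta_left if_distrib cong: if_cong)




lemma schur_quad:
  assumes X: "psd_mat k X" and ck: "c < k" and cpos: "X c c > 0"
  shows "0 \<le> bil k (\<lambda>a b. X a b - X a c * X b c / X c c) x x"
proof -
  define L where "L = (\<Sum>a<k. x a * X a c)"
  have L2: "(\<Sum>b<k. X c b * x b) = L" unfolding L_def
    using psd_sym[OF X] ck by (auto intro!: sum.cong simp: mult.commute)
  define s where "s = - (L / X c c)"
  define e where "e = (\<lambda>a. if a = c then 1 else (0::real))"
  have "bil k (\<lambda>a b. X a b - X a c * X b c / X c c) x x
      = (\<Sum>a<k. \<Sum>b<k. x a * X a b * x b - (x a * X a c) * (X b c * x b) / X c c)"
    unfolding bil_def by (intro sum.cong refl) (simp add: algebra_simps)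
  also have "\<dots> = bil k X x x - (\<Sum>a<k. x a * X a c) * (\<Sum>b<k. X b c * x b) / X c c"
    by (simp add: bil_def sum_subtractf sum_product sum_divide_distrib)
  also have "(\<Sum>b<k. X b c * x b) = L" unfolding L_def by (simp add: mult.commute)
  finally have A: "bil k (\<lambda>a b. X a b - X a c * X b c / X c c) x x = bil k X x x - L * L / X c c"
    unfolding L_def .
  have B: "bil k X (\<lambda>a. x a + s * e a) (\<lambda>a. x a + s * e a)
      = bil k X x x + s * bil k X e x + s * (bil k X x e + s * bil k X e e)"
    unfolding bil_add_left bil_add_right by (simp add: algebra_simps)
  have C1: "bil k X e x = L" unfolding e_def using bil_delta_left[OF ck] L2 by simp
  have C2: "bil k X x e = L" unfolding e_def using bil_delta_right[OF ck] L_def by simp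
  have "bil k X e e = (\<Sum>b<k. if b = c then X c b else 0)"
    unfolding e_def bil_delta_left[OF ck] by (rule sum.cong) auto
  hence C3: "bil k X e e = X c c" using ck by simp
  have D: "bil k X x x + s * L + s * (L + s * X c c) = bil k X x x - L * L / X c c"
    unfolding s_def using cpos by (simp add: field_simps)
  have "0 \<le> bil k X (\<lambda>a. x a + s * e a) (\<lambda>a. x a + s * e a)" by (rule psd_bil[OF X])
  thus ?thesis unfolding A using B C1 C2 C3 D by simp
qed

lemma psd_decomp_aux:
  "\<forall>X. psd_mat k X \<and> (\<forall>a<k. \<forall>b<k. (a < k - t \<or> b < k - t) \<longrightarrow> X a b = 0) \<longrightarrow>
     (\<exists>W (r::nat). \<forall>a<k. \<forall>b<k. X a b = (\<Sum>l<r. W l a * W l b))"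
proof (induction t)
  case 0
  show ?case
  proof (intro allI impI)
    fix X assume A0: "psd_mat k X \<and> (\<forall>a<k. \<forall>b<k. (a < k - 0 \<or> b < k - 0) \<longrightarrow> X a b = 0)"
    show "\<exists>W (r::nat). \<forall>a<k. \<forall>b<k. X a b = (\<Sum>l<r. W l a * W l b)"
      apply (rule exI[where x="\<lambda>_ _. 0"])
      apply (rule exI[where x="0::nat"])
      using A0 by simp
  qed
next
  case (Suc t)
  have IH: "\<exists>W (r::nat). \<forall>a<k. \<forall>b<k. Y a b = (\<Sum>l<r. W l a * W l b)"
    if "psd_mat k Y" "\<forall>a<k. \<forall>b<k. (a < k - t \<or> b < k - t) \<longrightarrow> Y a b = 0" for Y
  proof -
    from Suc.IH have "psd_mat k Y \<and> (\<forall>a<k. \<forall>b<k. (a < k - t \<or> b < k - t) \<longrightarrow> Y a b = 0) \<longrightarrow>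
     (\<exists>W (r::nat). \<forall>a<k. \<forall>b<k. Y a b = (\<Sum>l<r. W l a * W l b))" by (rule spec)
    then show ?thesis by (rule mp) (rule conjI[OF that])
  qed
  show ?case
  proof (intro allI impI)
    fix X assume H: "psd_mat k X \<and> (\<forall>a<k. \<forall>b<k. (a < k - Suc t \<or> b < k - Suc t) \<longrightarrow> X a b = 0)"
    hence X: "psd_mat k X" by simp
    show "\<exists>W (r::nat). \<forall>a<k. \<forall>b<k. X a b = (\<Sum>l<r. W l a * W l b)"
    proof (cases "Suc t \<le> k")
      case False
      hence "k - Suc t = k - t" by simp
      hence "\<forall>a<k. \<forall>b<k. (a < k - t \<or> b < k - t) \<longrightarrow> X a b = 0" using H by simp
      thus ?thesis by (rule IH[OF X])
    next
      case True
      define c where "c = k - Suc t"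
      have ck: "c < k" and kt: "k - t = Suc c" using True unfolding c_def by auto
      have Z: "\<And>a b. a < k \<Longrightarrow> b < k \<Longrightarrow> a < c \<or> b < c \<Longrightarrow> X a b = 0" using H unfolding c_def by blast
      show ?thesis
      proof (cases "X c c = 0")
        case True
        have "\<forall>a<k. \<forall>b<k. (a < k - t \<or> b < k - t) \<longrightarrow> X a b = 0"
        proof (intro allI impI)
          fix a b assume ab: "a < k" "b < k" "a < k - t \<or> b < k - t"
          hence "a < c \<or> a = c \<or> b < c \<or> b = c" using kt by auto
          thus "X a b = 0"
          proof (elim disjE)
            assume "a < c" thus ?thesis using Z ab by simp
          next
            assume "b < c" thus ?thesis using Z ab by simp
          next
            assume "a = c" thus ?thesis using diag_zero(2)[OF X True ck \<open>b < k\<close>] by simp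
          next
            assume "b = c" thus ?thesis using diag_zero(1)[OF X True ck \<open>a < k\<close>] by simp
          qed
        qed
        thus ?thesis by (rule IH[OF X])
      next
        case False
        have cpos: "X c c > 0" using diag_nonneg[OF X ck] False by simp
        define w where "w a = X a c / sqrt (X c c)" for a
        define X' where "X' a b = X a b - w a * w b" for a b
        have ww: "w a * w b = X a c * X b c / X c c" for a b
          unfolding w_def using cpos by (simp add: field_simps)
        have sym': "\<forall>a<k. \<forall>b<k. X' a b = X' b a"
          unfolding X'_def using psd_sym[OF X] by (simp add: mult.commute)
        have quad': "0 \<le> bil k X' x x" for x
        proof -
          have "X' = (\<lambda>a b. X a b - X a c * X b c / X c c)" unfolding X'_def ww by (intro ext) simp
          thus ?thesis using schur_quad[OF X ck cpos] by simp
        qed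
        have psd': "psd_mat k X'" using sym' quad' unfolding psd_mat_def bil_def by auto
        have Z': "\<forall>a<k. \<forall>b<k. (a < k - t \<or> b < k - t) \<longrightarrow> X' a b = 0"
        proof (intro allI impI)
          fix a b assume ab: "a < k" "b < k" "a < k - t \<or> b < k - t"
          hence "a < c \<or> a = c \<or> b < c \<or> b = c" using kt by auto
          thus "X' a b = 0"
          proof (elim disjE)
            assume "a < c" thus ?thesis unfolding X'_def ww using Z ab ck by simp
          next
            assume "b < c" thus ?thesis unfolding X'_def ww using Z ab ck by simp
          next
            assume "a = c" thus ?thesis unfolding X'_def ww using cpos psd_sym[OF X] ab ck by simp
          next
            assume "b = c" thus ?thesis unfolding X'_def ww using cpos psd_sym[OF X] ab ck by simp
          qed
        qed
        from IH[OF psd' Z'] obtain W and r :: nat where W: "\<forall>a<k. \<forall>b<k. X' a b = (\<Sum>l<r. W l a * W l b)"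
          by (elim exE)
        define W' where "W' l = (if l < r then W l else w)" for l
        have "\<forall>a<k. \<forall>b<k. X a b = (\<Sum>l<Suc r. W' l a * W' l b)"
        proof (intro allI impI)
          fix a b assume ab: "a < k" "b < k"
          have S1: "(\<Sum>l<r. W' l a * W' l b) = (\<Sum>l<r. W l a * W l b)"
            by (rule sum.cong) (simp_all add: W'_def)
          have S2: "W' r = w" by (simp add: W'_def)
          have "(\<Sum>l<Suc r. W' l a * W' l b) = (\<Sum>l<r. W' l a * W' l b) + W' r a * W' r b"
            by (rule sum.lessThan_Suc)
          also have "\<dots> = (\<Sum>l<r. W l a * W l b) + w a * w b" unfolding S1 S2 ..
          also have "\<dots> = X a b"
          proof -
            have "X' a b = (\<Sum>l<r. W l a * W l b)" using W ab by blast
            thus ?thesis unfolding X'_def by linarith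
          qed
          finally show "X a b = (\<Sum>l<Suc r. W' l a * W' l b)" by simp
        qed
        thus ?thesis by (intro exI)
      qed
    qed
  qed
qed

lemma psd_decomp: assumes "psd_mat k X" shows "\<exists>W (r::nat). \<forall>a<k. \<forall>b<k. X a b = (\<Sum>l<r. W l a * W l b)"
proof -
  have "psd_mat k X \<and> (\<forall>a<k. \<forall>b<k. (a < k - k \<or> b < k - k) \<longrightarrow> X a b = 0)" using assms by simp
  thus ?thesis by (rule mp[OF spec[OF psd_decomp_aux[of k k]]])
qed



lemma trace_zero_prod:
  assumes X: "psd_mat k X" and Y: "psd_mat k Y" and t: "trace_inner k X Y = 0"
    and a: "a < k" and b: "b < k"
  shows "(\<Sum>c<k. X a c * Y c b) = 0"
proof -
  from psd_decomp[OF Y] obtain W and r :: nat where W: "\<forall>a<k. \<forall>b<k. Y a b = (\<Sum>l<r. W l a * W l b)"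
    by (elim exE)
  have "trace_inner k X Y = (\<Sum>a<k. \<Sum>b<k. X a b * (\<Sum>l<r. W l b * W l a))"
    unfolding trace_inner_def using W by (intro sum.cong refl) simp
  also have "\<dots> = (\<Sum>a<k. \<Sum>b<k. \<Sum>l<r. W l a * X a b * W l b)"
    by (simp add: sum_distrib_left mult_ac)
  also have "\<dots> = (\<Sum>a<k. \<Sum>l<r. \<Sum>b<k. W l a * X a b * W l b)"
    by (rule sum.cong[OF refl], rule sum.swap)
  also have "\<dots> = (\<Sum>l<r. bil k X (W l) (W l))"
    unfolding bil_def by (rule sum.swap)
  finally have "(\<Sum>l<r. bil k X (W l) (W l)) = 0" using t by simp
  moreover have "(\<Sum>l<r. bil k X (W l) (W l)) = 0 \<longleftrightarrow> (\<forall>l\<in>{..<r}. bil k X (W l) (W l) = 0)"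
    by (rule sum_nonneg_eq_0_iff) (simp_all add: psd_bil[OF X])
  ultimately have "\<forall>l\<in>{..<r}. bil k X (W l) (W l) = 0" by blast
  hence Z: "\<And>l. l < r \<Longrightarrow> (\<Sum>c<k. X a c * W l c) = 0" using quad_zero[OF X _ a] by auto
  have "(\<Sum>c<k. X a c * Y c b) = (\<Sum>c<k. X a c * (\<Sum>l<r. W l c * W l b))"
    using W b by (intro sum.cong refl) simp
  also have "\<dots> = (\<Sum>c<k. \<Sum>l<r. X a c * W l c * W l b)"
    by (simp add: sum_distrib_left mult_ac)
  also have "\<dots> = (\<Sum>l<r. \<Sum>c<k. X a c * W l c * W l b)"
    by (rule sum.swap)
  also have "\<dots> = (\<Sum>l<r. (\<Sum>c<k. X a c * W l c) * W l b)"
    by (simp add: sum_distrib_right)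
  also have "\<dots> = 0" using Z by simp
  finally show ?thesis .
qed




definition mm :: "nat \<Rightarrow> (nat \<Rightarrow> nat \<Rightarrow> real) \<Rightarrow> (nat \<Rightarrow> nat \<Rightarrow> real) \<Rightarrow> nat \<Rightarrow> nat \<Rightarrow> real" where
  "mm k X Y = (\<lambda>a b. if a < k \<and> b < k then (\<Sum>c<k. X a c * Y c b) else 0)"
definition clean :: "nat \<Rightarrow> (nat \<Rightarrow> nat \<Rightarrow> real) \<Rightarrow> nat \<Rightarrow> nat \<Rightarrow> real" where
  "clean k X = (\<lambda>a b. if a < k \<and> b < k then X a b else 0)"
definition idm :: "nat \<Rightarrow> nat \<Rightarrow> nat \<Rightarrow> real" where
  "idm k = (\<lambda>a b. if a < k \<and> b < k \<and> a = b then 1 else 0)"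
definition trn :: "(nat \<Rightarrow> nat \<Rightarrow> real) \<Rightarrow> nat \<Rightarrow> nat \<Rightarrow> real" where
  "trn X = (\<lambda>a b. X b a)"
definition tr :: "nat \<Rightarrow> (nat \<Rightarrow> nat \<Rightarrow> real) \<Rightarrow> real" where
  "tr k X = (\<Sum>a<k. X a a)"
definition cg :: "nat \<Rightarrow> (nat \<Rightarrow> nat \<Rightarrow> real) \<Rightarrow> (nat \<Rightarrow> nat \<Rightarrow> real) \<Rightarrow> nat \<Rightarrow> nat \<Rightarrow> real" where
  "cg k G A = mm k (trn G) (mm k A G)"

lemma mm_app: "a < k \<Longrightarrow> b < k \<Longrightarrow> mm k X Y a b = (\<Sum>c<k. X a c * Y c b)"
  by (simp add: mm_def)

lemma mm_out: "\<not> (a < k \<and> b < k) \<Longrightarrow> mm k X Y a b = 0"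
  unfolding mm_def by auto

lemma mm_assoc: "mm k (mm k X Y) Z = mm k X (mm k Y Z)"
proof (intro ext)
  fix a b
  show "mm k (mm k X Y) Z a b = mm k X (mm k Y Z) a b"
  proof (cases "a < k \<and> b < k")
    case True
    have "mm k (mm k X Y) Z a b = (\<Sum>c<k. (\<Sum>d<k. X a d * Y d c) * Z c b)"
      using True by (simp add: mm_app)
    also have "\<dots> = (\<Sum>c<k. \<Sum>d<k. X a d * Y d c * Z c b)"
      by (simp add: sum_distrib_right)
    also have "\<dots> = (\<Sum>d<k. \<Sum>c<k. X a d * Y d c * Z c b)"
      by (rule sum.swap)
    also have "\<dots> = (\<Sum>d<k. X a d * (\<Sum>c<k. Y d c * Z c b))"
      by (simp add: sum_distrib_left mult.assoc)
    also have "\<dots> = mm k X (mm k Y Z) a b"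
      using True by (simp add: mm_app)
    finally show ?thesis .
  qed (auto simp: mm_def)
qed

lemma mm_clean_left: "mm k (clean k X) Y = mm k X Y"
  unfolding mm_def clean_def by (intro ext) (auto intro!: sum.cong)

lemma mm_clean_right: "mm k X (clean k Y) = mm k X Y"
  unfolding mm_def clean_def by (intro ext) (auto intro!: sum.cong)

lemma mm_idm_left: "mm k (idm k) X = clean k X"
proof (intro ext)
  fix a b
  show "mm k (idm k) X a b = clean k X a b"
  proof (cases "a < k \<and> b < k")
    case True
    have "mm k (idm k) X a b = (\<Sum>c<k. if c = a then X a b else 0)"
      using True unfolding mm_app[OF conjunct1[OF True] conjunct2[OF True]]
      by (intro sum.cong) (auto simp: idm_def)
    thus ?thesis using True by (simp add: clean_def)
  qed (auto simp: mm_def clean_def)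
qed

lemma mm_idm_right: "mm k X (idm k) = clean k X"
proof (intro ext)
  fix a b
  show "mm k X (idm k) a b = clean k X a b"
  proof (cases "a < k \<and> b < k")
    case True
    have "mm k X (idm k) a b = (\<Sum>c<k. if c = b then X a b else 0)"
      using True unfolding mm_app[OF conjunct1[OF True] conjunct2[OF True]]
      by (intro sum.cong) (auto simp: idm_def)
    thus ?thesis using True by (simp add: clean_def)
  qed (auto simp: mm_def clean_def)
qed

lemma trn_trn[simp]: "trn (trn X) = X" by (simp add: trn_def)
lemma trn_idm[simp]: "trn (idm k) = idm k" by (auto simp: trn_def idm_def intro!: ext)
lemma trn_mm: "trn (mm k X Y) = mm k (trn Y) (trn X)"
  unfolding trn_def mm_def by (intro ext) (auto simp: mult.commute)

lemma tr_comm: "tr k (mm k X Y) = tr k (mm k Y X)"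
proof -
  have "tr k (mm k X Y) = (\<Sum>a<k. \<Sum>c<k. X a c * Y c a)" unfolding tr_def by (simp add: mm_app)
  also have "\<dots> = (\<Sum>c<k. \<Sum>a<k. X a c * Y c a)" by (rule sum.swap)
  also have "\<dots> = tr k (mm k Y X)" unfolding tr_def by (simp add: mm_app mult.commute)
  finally show ?thesis .
qed

lemma trace_inner_tr: "trace_inner k A B = tr k (mm k A B)"
  unfolding trace_inner_def tr_def by (simp add: mm_app)

lemma trace_cg:
  assumes "mm k G H = idm k"
  shows "trace_inner k (cg k G A) (cg k (trn H) B) = trace_inner k A B"
proof -
  have "trace_inner k (cg k G A) (cg k (trn H) B)
      = tr k (mm k (trn G) (mm k A (mm k G (mm k H (mm k B (trn H))))))"
    unfolding trace_inner_tr cg_def by (simp add: mm_assoc)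
  also have "\<dots> = tr k (mm k (mm k A (mm k G (mm k H (mm k B (trn H))))) (trn G))"
    by (rule tr_comm)
  also have "\<dots> = tr k (mm k A (mm k (mm k G H) (mm k B (mm k (trn H) (trn G)))))"
    by (simp add: mm_assoc)
  also have "mm k (trn H) (trn G) = idm k" using assms trn_mm[of k G H, symmetric] by simp
  also have "tr k (mm k A (mm k (mm k G H) (mm k B (idm k)))) = tr k (mm k A B)"
    using assms by (simp add: mm_idm_left mm_idm_right mm_clean_right)
  finally show ?thesis by (simp add: trace_inner_tr)
qed

lemma cg_comp: "cg k (mm k X Y) A = cg k Y (cg k X A)"
  unfolding cg_def by (simp add: trn_mm mm_assoc)

lemma cg_app:
  assumes "a < k" "b < k"
  shows "cg k G A a b = bil k A (\<lambda>c. G c a) (\<lambda>d. G d b)"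
proof -
  have "cg k G A a b = (\<Sum>c<k. G c a * (\<Sum>d<k. A c d * G d b))"
    unfolding cg_def using assms by (simp add: mm_app trn_def)
  thus ?thesis unfolding bil_alt by (simp add: mult.assoc)
qed

lemma bil_sum_left:
  "bil k X (\<lambda>c. \<Sum>a<k. G c a * x a) y = (\<Sum>a<k. x a * bil k X (\<lambda>c. G c a) y)"
proof -
  have "bil k X (\<lambda>c. \<Sum>a<k. G c a * x a) y = (\<Sum>c<k. \<Sum>a<k. G c a * x a * (\<Sum>b<k. X c b * y b))"
    unfolding bil_alt by (simp add: sum_distrib_right)
  also have "\<dots> = (\<Sum>a<k. \<Sum>c<k. G c a * x a * (\<Sum>b<k. X c b * y b))" by (rule sum.swap)
  also have "\<dots> = (\<Sum>a<k. x a * bil k X (\<lambda>c. G c a) y)"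
    unfolding bil_alt by (simp add: sum_distrib_left mult_ac)
  finally show ?thesis .
qed

lemma bil_sum_right:
  "bil k X y (\<lambda>c. \<Sum>a<k. G c a * x a) = (\<Sum>a<k. x a * bil k X y (\<lambda>c. G c a))"
proof -
  have "bil k X y (\<lambda>c. \<Sum>a<k. G c a * x a) = (\<Sum>c<k. \<Sum>a<k. (\<Sum>b<k. y b * X b c) * G c a * x a)"
    unfolding bil_alt2 by (simp add: sum_distrib_left mult.assoc)
  also have "\<dots> = (\<Sum>a<k. \<Sum>c<k. (\<Sum>b<k. y b * X b c) * G c a * x a)" by (rule sum.swap)
  also have "\<dots> = (\<Sum>a<k. x a * bil k X y (\<lambda>c. G c a))"
    unfolding bil_alt2 by (simp add: sum_distrib_left mult_ac)
  finally show ?thesis .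
qed

lemma psd_cg:
  assumes A: "psd_mat k A"
  shows "psd_mat k (cg k G A)"
  unfolding psd_mat_def
proof (intro conjI allI impI)
  fix i j assume "i < k" "j < k"
  thus "cg k G A i j = cg k G A j i"
    using bil_sym[of k A] psd_sym[OF A] by (simp add: cg_app)
next
  fix x :: "nat \<Rightarrow> real"
  define y where "y c = (\<Sum>a<k. G c a * x a)" for c
  have "(\<Sum>i<k. \<Sum>j<k. x i * cg k G A i j * x j) = (\<Sum>i<k. \<Sum>j<k. x i * (x j * bil k A (\<lambda>c. G c i) (\<lambda>d. G d j)))"
    by (intro sum.cong refl) (simp add: cg_app mult_ac)
  also have "\<dots> = bil k A y y"
    unfolding y_def bil_sum_left bil_sum_right by (simp add: sum_distrib_left)
  finally show "0 \<le> (\<Sum>i<k. \<Sum>j<k. x i * cg k G A i j * x j)" using psd_bil[OF A] by simp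
qed




definition supp :: "nat \<Rightarrow> nat set \<Rightarrow> (nat \<Rightarrow> nat \<Rightarrow> real) \<Rightarrow> bool" where
  "supp k T X \<longleftrightarrow> (\<forall>a<k. \<forall>b<k. (a \<notin> T \<or> b \<notin> T) \<longrightarrow> X a b = 0)"

lemma clean_clean[simp]: "clean k (clean k X) = clean k X"
  unfolding clean_def by (intro ext) auto

lemma clean_idm[simp]: "clean k (idm k) = idm k"
  unfolding clean_def idm_def by (auto intro!: ext)

lemma cg_idm: "cg k (idm k) X = clean k X"
  unfolding cg_def by (simp add: mm_idm_left mm_idm_right)

lemma supp_clean: "supp k S (clean k X) \<longleftrightarrow> supp k S X"
  unfolding supp_def clean_def by auto

lemma bil_zero:
  assumes "\<forall>b<k. (\<Sum>c<k. x c * X c b) = 0"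
  shows "bil k X x y = 0"
  unfolding bil_alt2 using assms by simp

lemma key:
  "card F = n \<Longrightarrow> F \<subseteq> {..<k} \<Longrightarrow> (\<forall>i\<in>I. psd_mat k (A i) \<and> supp k F (A i)) \<Longrightarrow>
   (\<forall>j\<in>J. psd_mat k (B j)) \<Longrightarrow> (\<forall>i\<in>I. \<forall>j\<in>J. trace_inner k (A i) (B j) = 0) \<Longrightarrow>
   \<exists>G H S. mm k G H = idm k \<and> S \<subseteq> F \<and> (\<forall>i\<in>I. supp k S (cg k G (A i))) \<and>
      (\<forall>j\<in>J. supp k ({..<k} - S) (cg k (trn H) (B j)))"
proof (induction n arbitrary: F A B rule: less_induct)
  case (less n F A B)
  have Fk: "F \<subseteq> {..<k}" and PA: "\<And>i. i \<in> I \<Longrightarrow> psd_mat k (A i)"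
    and SA: "\<And>i. i \<in> I \<Longrightarrow> supp k F (A i)" and PB: "\<And>j. j \<in> J \<Longrightarrow> psd_mat k (B j)"
    and TZ: "\<And>i j. i \<in> I \<Longrightarrow> j \<in> J \<Longrightarrow> trace_inner k (A i) (B j) = 0"
    using less.prems by auto
  show ?case
  proof (cases "\<exists>j\<in>J. \<exists>m\<in>F. B j m m \<noteq> 0")
    case False
    have "mm k (idm k) (idm k) = idm k" by (simp add: mm_idm_left)
    moreover have "\<forall>i\<in>I. supp k F (cg k (idm k) (A i))"
      using SA by (simp add: cg_idm supp_clean)
    moreover have "\<forall>j\<in>J. supp k ({..<k} - F) (cg k (trn (idm k)) (B j))"
    proof
      fix j assume j: "j \<in> J"
      have "B j a b = 0" if "a < k" "b < k" "a \<in> F \<or> b \<in> F" for a b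
      proof -
        from that(3) show ?thesis
        proof
          assume "a \<in> F" hence "B j a a = 0" using False j by auto
          thus ?thesis using diag_zero(2)[OF PB[OF j] _ \<open>a < k\<close> \<open>b < k\<close>] by simp
        next
          assume "b \<in> F" hence "B j b b = 0" using False j by auto
          thus ?thesis using diag_zero(1)[OF PB[OF j] _ \<open>b < k\<close> \<open>a < k\<close>] by simp
        qed
      qed
      thus "supp k ({..<k} - F) (cg k (trn (idm k)) (B j))"
        by (auto simp: cg_idm supp_clean supp_def clean_def)
    qed
    ultimately show ?thesis by blast
  next
    case True
    then obtain j m where j: "j \<in> J" and mF: "m \<in> F" and Bm: "B j m m \<noteq> 0" by blast
    have mk: "m < k" using mF Fk by auto
    define v where "v c = (if c \<in> F then B j c m else 0)" for c
    have vm: "v m \<noteq> 0" using Bm mF by (simp add: v_def)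
    have kill: "(\<Sum>c<k. A i a c * v c) = 0" if i: "i \<in> I" and a: "a < k" for i a
    proof -
      have "(\<Sum>c<k. A i a c * v c) = (\<Sum>c<k. A i a c * B j c m)"
        using SA[OF i] a unfolding v_def supp_def by (intro sum.cong) auto
      also have "\<dots> = 0" by (rule trace_zero_prod[OF PA[OF i] PB[OF j] TZ[OF i j] a mk])
      finally show ?thesis .
    qed
    define G1 where "G1 a b = (if a < k \<and> b < k then (if b = m then v a else if a = b then 1 else 0) else 0)" for a b
    define u where "u a = (if a = m then 1 / v m else - v a / v m)" for a
    define H1 where "H1 a b = (if a < k \<and> b < k then (if b = m then u a else if a = b then 1 else 0) else 0)" for a b
    have GH: "mm k G1 H1 = idm k"
    proof (intro ext)
      fix a b
      show "mm k G1 H1 a b = idm k a b"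
      proof (cases "a < k \<and> b < k")
        case False thus ?thesis by (auto simp: mm_def idm_def)
      next
        case True
        hence ak: "a < k" and bk: "b < k" by auto
        show ?thesis
        proof (cases "b = m")
          case False
          have "mm k G1 H1 a b = (\<Sum>c<k. if c = b then G1 a b else 0)"
            unfolding mm_app[OF ak bk] using False bk by (intro sum.cong) (auto simp: H1_def)
          also have "\<dots> = G1 a b" using bk by simp
          finally show ?thesis using False ak bk by (simp add: G1_def idm_def)
        next
          case bm: True
          have "mm k G1 H1 a b = (\<Sum>c<k. G1 a c * u c)"
            unfolding mm_app[OF ak bk] using bm mk by (intro sum.cong) (auto simp: H1_def)
          also have "\<dots> = G1 a m * u m + (\<Sum>c\<in>{..<k} - {m}. G1 a c * u c)"
            using mk by (subst sum.remove[of _ m]) auto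
          also have "(\<Sum>c\<in>{..<k} - {m}. G1 a c * u c) = (\<Sum>c\<in>{..<k} - {m}. if c = a then u a else 0)"
            using ak by (intro sum.cong) (auto simp: G1_def)
          also have "\<dots> = (if a \<noteq> m then u a else 0)" using ak by (simp add: sum.delta)
          also have "G1 a m * u m + (if a \<noteq> m then u a else 0) = (if a = m then 1 else 0)"
            using ak mk vm by (auto simp: G1_def u_def)
          finally show ?thesis using ak bk bm by (simp add: idm_def)
        qed
      qed
    qed
    define A' where "A' i = cg k G1 (A i)" for i
    define B' where "B' j = cg k (trn H1) (B j)" for j
    have colkill: "(\<Sum>c<k. G1 c a * A i c b) = 0" if i: "i \<in> I" and a: "a < k" and b: "b < k" and am: "a = m \<or> a \<notin> F" for i a b
      using am
    proof
      assume am: "a = m"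
      have "(\<Sum>c<k. G1 c a * A i c b) = (\<Sum>c<k. A i b c * v c)"
        using am mk b psd_sym[OF PA[OF i]] by (intro sum.cong) (auto simp: G1_def mult.commute)
      also have "\<dots> = 0" by (rule kill[OF i b])
      finally show ?thesis .
    next
      assume aF: "a \<notin> F"
      hence am: "a \<noteq> m" using mF by auto
      have "(\<Sum>c<k. G1 c a * A i c b) = (\<Sum>c<k. if c = a then A i a b else 0)"
        using am a by (intro sum.cong) (auto simp: G1_def)
      also have "\<dots> = 0" using a b aF SA[OF i] by (simp add: supp_def)
      finally show ?thesis .
    qed
    have SA': "supp k (F - {m}) (A' i)" if i: "i \<in> I" for i
      unfolding supp_def
    proof (intro allI impI)
      fix a b assume ab: "a < k" "b < k" "a \<notin> F - {m} \<or> b \<notin> F - {m}"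
      have e: "A' i a b = bil k (A i) (\<lambda>c. G1 c a) (\<lambda>d. G1 d b)"
        unfolding A'_def using ab by (simp add: cg_app)
      from ab(3) show "A' i a b = 0"
      proof
        assume "a \<notin> F - {m}"
        hence "a = m \<or> a \<notin> F" by auto
        thus ?thesis unfolding e using colkill[OF i ab(1)] by (intro bil_zero) auto
      next
        assume "b \<notin> F - {m}"
        hence "b = m \<or> b \<notin> F" by auto
        hence "bil k (A i) (\<lambda>d. G1 d b) (\<lambda>c. G1 c a) = 0"
          using colkill[OF i ab(2)] by (intro bil_zero) auto
        thus ?thesis unfolding e using bil_sym[of k "A i"] psd_sym[OF PA[OF i]] by metis
      qed
    qed
    have PA': "psd_mat k (A' i)" if "i \<in> I" for i unfolding A'_def using psd_cg PA that by blast
    have PB': "psd_mat k (B' j)" if "j \<in> J" for j unfolding B'_def using psd_cg PB that by blast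
    have TZ': "trace_inner k (A' i) (B' j) = 0" if "i \<in> I" "j \<in> J" for i j
      unfolding A'_def B'_def trace_cg[OF GH] using TZ that by simp
    have finF: "finite F" using Fk finite_subset by blast
    have lt: "card (F - {m}) < n" using card_Diff1_less[OF finF mF] less.prems(1) by simp
    have sub: "F - {m} \<subseteq> {..<k}" using Fk by auto
    obtain G2 H2 S where G2: "mm k G2 H2 = idm k" and S: "S \<subseteq> F - {m}"
      and SA2: "\<forall>i\<in>I. supp k S (cg k G2 (A' i))"
      and SB2: "\<forall>j\<in>J. supp k ({..<k} - S) (cg k (trn H2) (B' j))"
      using less.IH[OF lt refl sub, of A' B'] PA' SA' PB' TZ' by blast
    have "mm k (mm k G1 G2) (mm k H2 H1) = idm k"
    proof -
      have "mm k (mm k G1 G2) (mm k H2 H1) = mm k G1 (mm k (mm k G2 H2) H1)"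
        by (simp add: mm_assoc)
      also have "\<dots> = idm k" using G2 GH by (simp add: mm_idm_left mm_clean_right)
      finally show ?thesis .
    qed
    moreover have "\<forall>i\<in>I. supp k S (cg k (mm k G1 G2) (A i))"
      using SA2 by (simp add: cg_comp A'_def)
    moreover have "\<forall>j\<in>J. supp k ({..<k} - S) (cg k (trn (mm k H2 H1)) (B j))"
      using SB2 by (simp add: cg_comp B'_def trn_mm)
    moreover have "S \<subseteq> F" using S by auto
    ultimately show ?thesis by blast
  qed
qed




lemma reindex2:
  fixes f :: "nat \<Rightarrow> nat" and k n :: nat and h :: "nat \<Rightarrow> nat \<Rightarrow> real"
  assumes f: "bij_betw f {..<n} T" and T: "T \<subseteq> {..<k}"
    and h: "\<And>a b. a < k \<Longrightarrow> b < k \<Longrightarrow> a \<notin> T \<or> b \<notin> T \<Longrightarrow> h a b = 0"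
  shows "(\<Sum>a<k. \<Sum>b<k. h a b) = (\<Sum>a<n. \<Sum>b<n. h (f a) (f b))"
proof -
  have "(\<Sum>a<k. \<Sum>b<k. h a b) = (\<Sum>a\<in>T. \<Sum>b<k. h a b)"
  proof (rule sum.mono_neutral_right)
    show "\<forall>i\<in>{..<k} - T. (\<Sum>b<k. h i b) = 0" using h by auto
  qed (use T in auto)
  also have "\<dots> = (\<Sum>a\<in>T. \<Sum>b\<in>T. h a b)"
  proof (rule sum.cong[OF refl])
    fix a assume a: "a \<in> T"
    show "(\<Sum>b<k. h a b) = (\<Sum>b\<in>T. h a b)"
    proof (rule sum.mono_neutral_right)
      show "\<forall>i\<in>{..<k} - T. h a i = 0" using h a T by auto
    qed (use T in auto)
  qed
  also have "\<dots> = (\<Sum>a<n. \<Sum>b\<in>T. h (f a) b)"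
    by (rule sum.reindex_bij_betw[OF f, symmetric])
  also have "\<dots> = (\<Sum>a<n. \<Sum>b<n. h (f a) (f b))"
    by (rule sum.cong[OF refl], rule sum.reindex_bij_betw[OF f, symmetric])
  finally show ?thesis .
qed

lemma bij_in: "bij_betw f {..<n} T \<Longrightarrow> a < n \<Longrightarrow> f a \<in> T"
  using bij_betwE by blast

lemma psd_compress:
  assumes X: "psd_mat k X" and f: "bij_betw f {..<n} T" and T: "T \<subseteq> {..<k}"
  shows "psd_mat n (\<lambda>a b. X (f a) (f b))"
  unfolding psd_mat_def
proof (intro conjI allI impI)
  fix i j assume "i < n" "j < n"
  thus "X (f i) (f j) = X (f j) (f i)" using psd_sym[OF X] bij_in[OF f] T by blast
next
  fix x :: "nat \<Rightarrow> real"
  define y where "y c = (if c \<in> T then x (inv_into {..<n} f c) else 0)" for c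
  have yf: "y (f a) = x a" if "a < n" for a
    using that bij_in[OF f that] bij_betw_imp_inj_on[OF f] unfolding y_def
    by (simp add: inv_into_f_f)
  have "0 \<le> bil k X y y" by (rule psd_bil[OF X])
  also have "bil k X y y = (\<Sum>a<n. \<Sum>b<n. y (f a) * X (f a) (f b) * y (f b))"
    unfolding bil_def by (rule reindex2[OF f T]) (auto simp: y_def)
  also have "\<dots> = (\<Sum>a<n. \<Sum>b<n. x a * X (f a) (f b) * x b)"
    by (intro sum.cong refl) (simp add: yf)
  finally show "0 \<le> (\<Sum>a<n. \<Sum>b<n. x a * X (f a) (f b) * x b)" .
qed

lemma psd_embed:
  assumes Y: "psd_mat n Y" and f: "bij_betw f {..<n} T" and T: "T \<subseteq> {..<k}"
    and Xf: "\<And>a b. a < n \<Longrightarrow> b < n \<Longrightarrow> X (f a) (f b) = Y a b"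
    and X0: "\<And>a b. a < k \<Longrightarrow> b < k \<Longrightarrow> a \<notin> T \<or> b \<notin> T \<Longrightarrow> X a b = 0"
  shows "psd_mat k X"
  unfolding psd_mat_def
proof (intro conjI allI impI)
  fix i j assume ij: "i < k" "j < k"
  show "X i j = X j i"
  proof (cases "i \<in> T \<and> j \<in> T")
    case True
    then obtain a b where "a < n" "b < n" "i = f a" "j = f b"
      using f unfolding bij_betw_def by auto
    thus ?thesis using Xf psd_sym[OF Y] by simp
  next
    case False thus ?thesis using X0 ij by auto
  qed
next
  fix x :: "nat \<Rightarrow> real"
  have "(\<Sum>a<k. \<Sum>b<k. x a * X a b * x b) = (\<Sum>a<n. \<Sum>b<n. x (f a) * X (f a) (f b) * x (f b))"
    by (rule reindex2[OF f T]) (use X0 in auto)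
  also have "\<dots> = bil n Y (\<lambda>a. x (f a)) (\<lambda>a. x (f a))"
    unfolding bil_def by (intro sum.cong refl) (simp add: Xf)
  finally show "0 \<le> (\<Sum>a<k. \<Sum>b<k. x a * X a b * x b)" using psd_bil[OF Y] by simp
qed

lemma trace_compress:
  assumes f: "bij_betw f {..<n} T" and T: "T \<subseteq> {..<k}" and S: "supp k T X \<or> supp k T Y"
  shows "trace_inner k X Y = trace_inner n (\<lambda>a b. X (f a) (f b)) (\<lambda>a b. Y (f a) (f b))"
  unfolding trace_inner_def
  by (rule reindex2[OF f T]) (use S in \<open>auto simp: supp_def\<close>)

lemma exists_fact:
  assumes "nonneg_mat p q M"
  shows "has_psd_factorization p q M p"
proof -
  define A where "A i a b = (if a = i \<and> b = i then 1 else (0::real))" for i a b :: nat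
  define B where "B j a b = (if a = b then M a j else 0)" for j a b
  have "psd_mat p (A i)" if "i < p" for i
    unfolding psd_mat_def
  proof (intro conjI allI impI)
    fix x :: "nat \<Rightarrow> real"
    have "(\<Sum>a<p. \<Sum>b<p. x a * A i a b * x b) = (\<Sum>a<p. if a = i then x i * x i else 0)"
    proof (rule sum.cong[OF refl])
      fix a assume "a \<in> {..<p}"
      have "(\<Sum>b<p. x a * A i a b * x b) = (\<Sum>b<p. if b = i then (if a = i then x i * x i else 0) else 0)"
        by (rule sum.cong) (auto simp: A_def)
      thus "(\<Sum>b<p. x a * A i a b * x b) = (if a = i then x i * x i else 0)" using that by simp
    qed
    also have "\<dots> = x i * x i" using that by simp
    finally show "0 \<le> (\<Sum>a<p. \<Sum>b<p. x a * A i a b * x b)" by simp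
  qed (auto simp: A_def)
  moreover have "psd_mat p (B j)" if "j < q" for j
    unfolding psd_mat_def
  proof (intro conjI allI impI)
    fix x :: "nat \<Rightarrow> real"
    have "(\<Sum>a<p. \<Sum>b<p. x a * B j a b * x b) = (\<Sum>a<p. x a * M a j * x a)"
    proof (rule sum.cong[OF refl])
      fix a assume a: "a \<in> {..<p}"
      have "(\<Sum>b<p. x a * B j a b * x b) = (\<Sum>b<p. if b = a then x a * M a j * x a else 0)"
        by (rule sum.cong) (auto simp: B_def)
      thus "(\<Sum>b<p. x a * B j a b * x b) = x a * M a j * x a" using a by simp
    qed
    also have "\<dots> \<ge> 0"
    proof (intro sum_nonneg)
      fix a assume "a \<in> {..<p}"
      hence "0 \<le> M a j" using assms that unfolding nonneg_mat_def by auto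
      moreover have "x a * M a j * x a = M a j * (x a * x a)" by (simp add: mult_ac)
      ultimately show "0 \<le> x a * M a j * x a" by (metis mult_nonneg_nonneg zero_le_square)
    qed
    finally show "0 \<le> (\<Sum>a<p. \<Sum>b<p. x a * B j a b * x b)" .
  qed (auto simp: B_def)
  moreover have "M i j = trace_inner p (A i) (B j)" if "i < p" "j < q" for i j
  proof -
    have "trace_inner p (A i) (B j) = (\<Sum>a<p. if a = i then M i j else 0)"
      unfolding trace_inner_def by (intro sum.cong refl) (auto simp: A_def B_def if_distrib cong: if_cong)
    thus ?thesis using that by simp
  qed
  ultimately show ?thesis unfolding has_psd_factorization_def by blast
qed

lemma rank_le: "has_psd_factorization p q M k \<Longrightarrow> psd_rank p q M \<le> k"
  unfolding psd_rank_def by (rule Least_le)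

lemma rank_fact: "nonneg_mat p q M \<Longrightarrow> has_psd_factorization p q M (psd_rank p q M)"
  unfolding psd_rank_def by (rule LeastI[OF exists_fact])




lemma block_nonneg:
  assumes "nonneg_mat p1 q1 P" and "nonneg_mat p2 q1 Q" and "nonneg_mat p2 q2 R"
  shows "nonneg_mat (p1 + p2) (q1 + q2) (block_mat p1 q1 P Q R)"
  using assms unfolding nonneg_mat_def block_mat_def by auto

lemma lower_bound:
  assumes "nonneg_mat p1 q1 P" and "nonneg_mat p2 q1 Q" and "nonneg_mat p2 q2 R"
  shows "psd_rank p1 q1 P + psd_rank p2 q2 R \<le> psd_rank (p1 + p2) (q1 + q2) (block_mat p1 q1 P Q R)"
proof -
  define Mb where "Mb = block_mat p1 q1 P Q R"
  define k where "k = psd_rank (p1 + p2) (q1 + q2) Mb"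
  have "has_psd_factorization (p1 + p2) (q1 + q2) Mb k"
    unfolding k_def Mb_def by (rule rank_fact[OF block_nonneg[OF assms]])
  then obtain A B where PA: "\<forall>i<p1+p2. psd_mat k (A i)" and PB: "\<forall>j<q1+q2. psd_mat k (B j)"
    and MA: "\<forall>i<p1+p2. \<forall>j<q1+q2. Mb i j = trace_inner k (A i) (B j)"
    unfolding has_psd_factorization_def by blast
  have "\<exists>G H S. mm k G H = idm k \<and> S \<subseteq> {..<k} \<and> (\<forall>i\<in>{..<p1}. supp k S (cg k G (A i))) \<and>
      (\<forall>j\<in>{q1..<q1+q2}. supp k ({..<k} - S) (cg k (trn H) (B j)))"
  proof (rule key[OF refl])
    show "\<forall>i\<in>{..<p1}. psd_mat k (A i) \<and> supp k {..<k} (A i)" using PA by (auto simp: supp_def)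
    show "\<forall>j\<in>{q1..<q1+q2}. psd_mat k (B j)" using PB by auto
    show "\<forall>i\<in>{..<p1}. \<forall>j\<in>{q1..<q1+q2}. trace_inner k (A i) (B j) = 0"
    proof (intro ballI)
      fix i j assume ij: "i \<in> {..<p1}" "j \<in> {q1..<q1+q2}"
      hence "Mb i j = 0" by (simp add: Mb_def block_mat_def)
      moreover have "Mb i j = trace_inner k (A i) (B j)" using MA ij by auto
      ultimately show "trace_inner k (A i) (B j) = 0" by simp
    qed
  qed simp
  then obtain G H S where GH: "mm k G H = idm k" and Sk: "S \<subseteq> {..<k}"
    and SA: "\<forall>i\<in>{..<p1}. supp k S (cg k G (A i))"
    and SB: "\<forall>j\<in>{q1..<q1+q2}. supp k ({..<k} - S) (cg k (trn H) (B j))" by blast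
  define A' where "A' i = cg k G (A i)" for i
  define B' where "B' j = cg k (trn H) (B j)" for j
  have PA': "psd_mat k (A' i)" if "i < p1 + p2" for i using PA that psd_cg unfolding A'_def by blast
  have PB': "psd_mat k (B' j)" if "j < q1 + q2" for j using PB that psd_cg unfolding B'_def by blast
  have MA': "Mb i j = trace_inner k (A' i) (B' j)" if "i < p1 + p2" "j < q1 + q2" for i j
    using MA that unfolding A'_def B'_def trace_cg[OF GH] by blast
  define T where "T = {..<k} - S"
  have finS: "finite S" using Sk finite_subset by blast
  have finT: "finite T" unfolding T_def by simp
  obtain fS where fS: "bij_betw fS {..<card S} S"
    using ex_bij_betw_nat_finite[OF finS] by (auto simp: atLeast0LessThan)
  obtain fT where fT: "bij_betw fT {..<card T} T"
    using ex_bij_betw_nat_finite[OF finT] by (auto simp: atLeast0LessThan)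
  have Tk: "T \<subseteq> {..<k}" unfolding T_def by auto
  have cardT: "card T = k - card S" unfolding T_def using Sk by (simp add: card_Diff_subset finS)
  have "has_psd_factorization p1 q1 P (card S)"
    unfolding has_psd_factorization_def
  proof (intro exI conjI allI impI)
    fix i assume "i < p1"
    thus "psd_mat (card S) (\<lambda>a b. A' i (fS a) (fS b))" using psd_compress[OF PA' fS Sk] by simp
  next
    fix j assume "j < q1"
    thus "psd_mat (card S) (\<lambda>a b. B' j (fS a) (fS b))" using psd_compress[OF PB' fS Sk] by simp
  next
    fix i j assume ij: "i < p1" "j < q1"
    have "P i j = Mb i j" using ij by (simp add: Mb_def block_mat_def)
    also have "\<dots> = trace_inner k (A' i) (B' j)" using MA' ij by simp
    also have "\<dots> = trace_inner (card S) (\<lambda>a b. A' i (fS a) (fS b)) (\<lambda>a b. B' j (fS a) (fS b))"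
      by (rule trace_compress[OF fS Sk]) (use SA ij in \<open>simp add: A'_def\<close>)
    finally show "P i j = trace_inner (card S) (\<lambda>a b. A' i (fS a) (fS b)) (\<lambda>a b. B' j (fS a) (fS b))" .
  qed
  hence rP: "psd_rank p1 q1 P \<le> card S" by (rule rank_le)
  have "has_psd_factorization p2 q2 R (card T)"
    unfolding has_psd_factorization_def
  proof (intro exI conjI allI impI)
    fix i assume "i < p2"
    thus "psd_mat (card T) (\<lambda>a b. A' (p1 + i) (fT a) (fT b))" using psd_compress[OF PA' fT Tk] by simp
  next
    fix j assume "j < q2"
    thus "psd_mat (card T) (\<lambda>a b. B' (q1 + j) (fT a) (fT b))" using psd_compress[OF PB' fT Tk] by simp
  next
    fix i j assume ij: "i < p2" "j < q2"
    have "R i j = Mb (p1 + i) (q1 + j)" using ij by (simp add: Mb_def block_mat_def)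
    also have "\<dots> = trace_inner k (A' (p1 + i)) (B' (q1 + j))" using MA' ij by simp
    also have "\<dots> = trace_inner (card T) (\<lambda>a b. A' (p1 + i) (fT a) (fT b)) (\<lambda>a b. B' (q1 + j) (fT a) (fT b))"
      by (rule trace_compress[OF fT Tk]) (use SB ij in \<open>simp add: B'_def T_def\<close>)
    finally show "R i j = trace_inner (card T) (\<lambda>a b. A' (p1 + i) (fT a) (fT b)) (\<lambda>a b. B' (q1 + j) (fT a) (fT b))" .
  qed
  hence rR: "psd_rank p2 q2 R \<le> card T" by (rule rank_le)
  have "card S \<le> k" using Sk card_mono[of "{..<k}" S] by simp
  thus ?thesis using rP rR cardT unfolding k_def Mb_def by linarith
qed

lemma upper_bound:
  assumes "nonneg_mat p1 q1 P" and "nonneg_mat p2 q1 Q" and "nonneg_mat p2 q2 R"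
    and Q0: "\<forall>i<p2. \<forall>j<q1. Q i j = 0"
  shows "psd_rank (p1 + p2) (q1 + q2) (block_mat p1 q1 P Q R) \<le> psd_rank p1 q1 P + psd_rank p2 q2 R"
proof -
  define d1 where "d1 = psd_rank p1 q1 P"
  define d2 where "d2 = psd_rank p2 q2 R"
  have "has_psd_factorization p1 q1 P d1" unfolding d1_def by (rule rank_fact[OF assms(1)])
  then obtain AP BP where PAP: "\<forall>i<p1. psd_mat d1 (AP i)" and PBP: "\<forall>j<q1. psd_mat d1 (BP j)"
    and MP: "\<forall>i<p1. \<forall>j<q1. P i j = trace_inner d1 (AP i) (BP j)"
    unfolding has_psd_factorization_def by blast
  have "has_psd_factorization p2 q2 R d2" unfolding d2_def by (rule rank_fact[OF assms(3)])
  then obtain AR BR where PAR: "\<forall>i<p2. psd_mat d2 (AR i)" and PBR: "\<forall>j<q2. psd_mat d2 (BR j)"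
    and MR: "\<forall>i<p2. \<forall>j<q2. R i j = trace_inner d2 (AR i) (BR j)"
    unfolding has_psd_factorization_def by blast
  define k where "k = d1 + d2"
  define D where "D i = (if i < p1 then (\<lambda>a b. if a < d1 \<and> b < d1 then AP i a b else 0)
     else (\<lambda>a b. if d1 \<le> a \<and> d1 \<le> b then AR (i - p1) (a - d1) (b - d1) else 0))" for i
  define E where "E j = (if j < q1 then (\<lambda>a b. if a < d1 \<and> b < d1 then BP j a b else 0)
     else (\<lambda>a b. if d1 \<le> a \<and> d1 \<le> b then BR (j - q1) (a - d1) (b - d1) else 0))" for j
  have f1: "bij_betw (\<lambda>a. a) {..<d1} {..<d1}" unfolding bij_betw_def by simp
  have f2: "bij_betw (\<lambda>a. d1 + a) {..<d2} {d1..<k}"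
    unfolding k_def bij_betw_def
  proof
    show "inj_on ((+) d1) {..<d2}" by simp
    show "(+) d1 ` {..<d2} = {d1..<d1 + d2}"
    proof
      show "{d1..<d1 + d2} \<subseteq> (+) d1 ` {..<d2}"
      proof
        fix x assume "x \<in> {d1..<d1 + d2}"
        hence "x = d1 + (x - d1)" "x - d1 < d2" by auto
        thus "x \<in> (+) d1 ` {..<d2}" by blast
      qed
    qed auto
  qed
  have T1: "{..<d1} \<subseteq> {..<k}" and T2: "{d1..<k} \<subseteq> {..<k}" unfolding k_def by auto
  have PD: "psd_mat k (D i)" if i: "i < p1 + p2" for i
  proof (cases "i < p1")
    case True
    show ?thesis
      by (rule psd_embed[OF PAP[rule_format, OF True] f1 T1]) (use True in \<open>auto simp: D_def\<close>)
  next
    case False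
    hence "i - p1 < p2" using i by simp
    show ?thesis
      by (rule psd_embed[OF PAR[rule_format, OF \<open>i - p1 < p2\<close>] f2 T2]) (use False in \<open>auto simp: D_def\<close>)
  qed
  have PE: "psd_mat k (E j)" if j: "j < q1 + q2" for j
  proof (cases "j < q1")
    case True
    show ?thesis
      by (rule psd_embed[OF PBP[rule_format, OF True] f1 T1]) (use True in \<open>auto simp: E_def\<close>)
  next
    case False
    hence "j - q1 < q2" using j by simp
    show ?thesis
      by (rule psd_embed[OF PBR[rule_format, OF \<open>j - q1 < q2\<close>] f2 T2]) (use False in \<open>auto simp: E_def\<close>)
  qed
  have ME: "block_mat p1 q1 P Q R i j = trace_inner k (D i) (E j)" if ij: "i < p1 + p2" "j < q1 + q2" for i j
  proof (cases "i < p1")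
    case iT: True
    show ?thesis
    proof (cases "j < q1")
      case jT: True
      have "trace_inner k (D i) (E j) = (\<Sum>a<d1. \<Sum>b<d1. D i a b * E j b a)"
        unfolding trace_inner_def by (rule reindex2[OF f1 T1]) (use iT in \<open>auto simp: D_def\<close>)
      also have "\<dots> = trace_inner d1 (AP i) (BP j)"
        unfolding trace_inner_def using iT jT by (intro sum.cong refl) (simp add: D_def E_def)
      finally show ?thesis using MP iT jT by (simp add: block_mat_def)
    next
      case jF: False
      have "trace_inner k (D i) (E j) = 0"
        unfolding trace_inner_def using iT jF by (intro sum.neutral ballI) (auto simp: D_def E_def)
      thus ?thesis using iT jF by (simp add: block_mat_def)
    qed
  next
    case iF: False
    show ?thesis
    proof (cases "j < q1")
      case jT: True
      have "trace_inner k (D i) (E j) = 0"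
        unfolding trace_inner_def using iF jT by (intro sum.neutral ballI) (auto simp: D_def E_def)
      thus ?thesis using iF jT Q0 ij by (simp add: block_mat_def)
    next
      case jF: False
      have "trace_inner k (D i) (E j) = (\<Sum>a<d2. \<Sum>b<d2. D i (d1 + a) (d1 + b) * E j (d1 + b) (d1 + a))"
        unfolding trace_inner_def by (rule reindex2[OF f2 T2]) (use iF in \<open>auto simp: D_def\<close>)
      also have "\<dots> = trace_inner d2 (AR (i - p1)) (BR (j - q1))"
        unfolding trace_inner_def using iF jF by (intro sum.cong refl) (simp add: D_def E_def)
      finally show ?thesis using MR iF jF ij by (simp add: block_mat_def)
    qed
  qed
  have "has_psd_factorization (p1 + p2) (q1 + q2) (block_mat p1 q1 P Q R) k"
    unfolding has_psd_factorization_def using PD PE ME by blast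
  thus ?thesis unfolding k_def d1_def d2_def by (rule rank_le)
qed


theorem theorem2p7:
  fixes p1 p2 q1 q2 :: nat and P Q R :: "nat \<Rightarrow> nat \<Rightarrow> real"
  assumes "nonneg_mat p1 q1 P" and "nonneg_mat p2 q1 Q" and "nonneg_mat p2 q2 R"
  shows "psd_rank (p1 + p2) (q1 + q2) (block_mat p1 q1 P Q R)
           \<ge> psd_rank p1 q1 P + psd_rank p2 q2 R \<and>
         ((\<forall>i<p2. \<forall>j<q1. Q i j = 0) \<longrightarrow>
           psd_rank (p1 + p2) (q1 + q2) (block_mat p1 q1 P Q R)
             = psd_rank p1 q1 P + psd_rank p2 q2 R)"
proof (intro conjI impI)
  show "psd_rank (p1 + p2) (q1 + q2) (block_mat p1 q1 P Q R) \<ge> psd_rank p1 q1 P + psd_rank p2 q2 R"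
    using lower_bound[OF assms] by simp
next
  assume Q0: "\<forall>i<p2. \<forall>j<q1. Q i j = 0"
  show "psd_rank (p1 + p2) (q1 + q2) (block_mat p1 q1 P Q R) = psd_rank p1 q1 P + psd_rank p2 q2 R"
    using lower_bound[OF assms] upper_bound[OF assms Q0] by simp
qed

end
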